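(* There is a unique $q_0\approx0.989681$ such that $\delta(q)>0$ for $q>q_0$ and $\delta(q)<0$ for $q<q_0$.
   Context: For $q\in\mathbb{R}$ define $\delta(q)=\frac{1-(2/\pi)^{3q-8/5}}{3q-8/5}-\frac1{3q}$ if $q>0$, $q\ne\frac8{15}$; $\delta(\frac8{15})=-\ln\frac2\pi-\frac58$; and $\delta(q)=-\infty$ if $q\le0$. (This is the limit as $x\to\pi/2^-$ of $\frac{U_{3q-8/5}(\sin x/x)}{U_q(\cos x)}-\frac13$, where $U_p(s)=\frac{1-s^p}{p}$, $U_0(s)=-\ln s$.) *)

theory Defs
  imports "HOL-Analysis.Analysis" "HOL-Library.Extended_Real"
begin

definition delta :: "real \<Rightarrow> ereal" where
  "delta q =
     (if q \<le> 0 then -\<infinity>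
      else if q = 8/15 then ereal (- ln (2/pi) - 5/8)
      else ereal ((1 - (2/pi) powr (3*q - 8/5)) / (3*q - 8/5) - 1/(3*q)))"

end

theory Submission
  imports Defs
begin

lemma ln_lb:
  fixes x :: real and n :: nat
  assumes "x > 1"
  shows "(\<Sum>k<n. 2*((x-1)/(x+1))^(2*k+1) / of_nat (2*k+1)) \<le> ln x"
  using ln_approx_bounds[OF assms, of n] by simp

lemma ln_ub:
  fixes x :: real and n :: nat
  assumes "x > 1"
  shows "ln x \<le> (\<Sum>k<n. 2*((x-1)/(x+1))^(2*k+1) / of_nat (2*k+1))
          + 2 * (((x-1)/(x+1))^(2*n+1) / (1 - ((x-1)/(x+1))^2) / of_nat (2*n+1))"
  using ln_approx_bounds[OF assms, of n] by simp

lemma arctan_bnds: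
  fixes x :: real
  assumes x: "0 \<le> x" "x \<le> 1"
  shows "(\<Sum>i<2*n. (-1)^i * (1 / real (i * 2 + 1) * x ^ (i * 2 + 1))) \<le> arctan x"
    and "arctan x \<le> (\<Sum>i<2*n+1. (-1)^i * (1 / real (i * 2 + 1) * x ^ (i * 2 + 1)))"
proof -
  let ?a = "\<lambda>i. 1 / real (i * 2 + 1) * x ^ (i * 2 + 1)"
  have ax: "\<bar>x\<bar> \<le> 1" using x by simp
  have z: "?a \<longlonglongrightarrow> 0" by (rule zeroseq_arctan_series[OF ax])
  have p: "\<And>n. 0 \<le> ?a n" using x by simp
  have m: "?a (Suc n) \<le> ?a n" for n
  proof -
    have "x ^ (Suc n * 2 + 1) \<le> x ^ (n * 2 + 1)"
      using x by (intro power_decreasing) auto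
    moreover have "1 / real (Suc n * 2 + 1) \<le> 1 / real (n * 2 + 1)"
      by (intro divide_left_mono) auto
    ultimately show ?thesis
      by (intro mult_mono) (use x in auto)
  qed
  have eq: "arctan x = (\<Sum>i. (-1)^i * ?a i)" using arctan_series[OF ax] by simp
  show "(\<Sum>i<2*n. (-1)^i * ?a i) \<le> arctan x"
    unfolding eq by (rule summable_Leibniz'(2)[OF z p m])
  show "arctan x \<le> (\<Sum>i<2*n+1. (-1)^i * ?a i)"
    unfolding eq by (rule summable_Leibniz'(4)[OF z p m])
qed

lemma pi_bounds: "3.14159265358 \<le> pi \<and> pi \<le> (3.14159265360::real)"
proof -
  have a1: "0.1973955598498063 \<le> arctan (1/5::real)"
    using arctan_bnds(1)[of "1/5" 4] by (simp add: eval_nat_numeral)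
  have a2: "arctan (1/5::real) \<le> 0.1973955598498835"
    using arctan_bnds(2)[of "1/5" 4] by (simp add: eval_nat_numeral)
  have b1: "0.0041840760018182 \<le> arctan (1/239::real)"
    using arctan_bnds(1)[of "1/239" 1] by (simp add: eval_nat_numeral)
  have b2: "arctan (1/239::real) \<le> 0.0041840760020748"
    using arctan_bnds(2)[of "1/239" 1] by (simp add: eval_nat_numeral)
  have "pi = 16 * arctan (1/5) - 4 * arctan (1/239)" using machin by simp
  then show ?thesis using a1 a2 b1 b2 by (simp add: power_numeral_even power_numeral_odd; linarith)
qed

lemma lnpi2_ub: "ln (pi/2) \<le> (0.4515827052929 :: real)"
proof -
  have "ln (pi/2) \<le> ln (1.5707963268::real)"
    using pi_bounds pi_gt_zero by (subst ln_le_cancel_iff) auto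
  also have "\<dots> \<le> (\<Sum>k<7. 2*(((1.5707963268::real)-1)/((1.5707963268::real)+1))^(2*k+1) / of_nat (2*k+1)) + 2 * ((((1.5707963268::real)-1)/((1.5707963268::real)+1))^(2*7+1) / (1 - (((1.5707963268::real)-1)/((1.5707963268::real)+1))^2) / of_nat (2*7+1))"
    by (rule ln_ub) simp
  also have "\<dots> \<le> 0.4515827052929" by (simp add: eval_nat_numeral)
  finally show ?thesis .
qed

lemma lnpi2_lb: "(0.4515827052644 :: real) \<le> ln (pi/2)"
proof -
  have "(0.4515827052644 :: real) \<le> (\<Sum>k<7. 2*(((1.57079632679::real)-1)/((1.57079632679::real)+1))^(2*k+1) / of_nat (2*k+1))" by (simp add: eval_nat_numeral)
  also have "\<dots> \<le> ln (1.57079632679::real)"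
    by (rule ln_lb) simp
  also have "\<dots> \<le> ln (pi/2)"
    using pi_bounds pi_gt_zero by (subst ln_le_cancel_iff) auto
  finally show ?thesis .
qed

lemma lnt_lb: "(0.6182355421681 :: real) \<le> ln (29690415/16000000)"
proof -
  have "(0.6182355421681 :: real) \<le> (\<Sum>k<7. 2*(((29690415/16000000::real)-1)/((29690415/16000000::real)+1))^(2*k+1) / of_nat (2*k+1))" by (simp add: eval_nat_numeral)
  also have "\<dots> \<le> ln (29690415/16000000)"
    by (rule ln_lb) simp
  finally show ?thesis .
qed

lemma lnt_ub: "ln (29690445/16000000) \<le> (0.6182365546586 :: real)"
proof -
  have "ln (29690445/16000000) \<le> (\<Sum>k<7. 2*(((29690445/16000000::real)-1)/((29690445/16000000::real)+1))^(2*k+1) / of_nat (2*k+1)) + 2 * ((((29690445/16000000::real)-1)/((29690445/16000000::real)+1))^(2*7+1) / (1 - (((29690445/16000000::real)-1)/((29690445/16000000::real)+1))^2) / of_nat (2*7+1))"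
    by (rule ln_ub) simp
  also have "\<dots> \<le> (0.6182365546586 :: real)" by (simp add: eval_nat_numeral)
  finally show ?thesis .
qed

lemma F_inc:
  fixes c a b :: real
  assumes "c > 0" "0 < a" "a < b" "b \<le> 1/c"
  shows "ln a - c*a < ln b - c*b"
proof (rule DERIV_pos_imp_increasing_open[where f="\<lambda>x. ln x - c*x"])
  show "a < b" by fact
  fix x assume x: "a < x" "x < b"
  have "x > 0" using assms x by linarith
  have "x < 1/c" using x assms by linarith
  then have "1/x > c" using \<open>x>0\<close> \<open>c>0\<close> by (simp add: field_simps)
  moreover have "DERIV (\<lambda>x. ln x - c*x) x :> 1/x - c"
    using \<open>x>0\<close> by (auto intro!: derivative_eq_intros)
  ultimately show "\<exists>y. DERIV (\<lambda>x. ln x - c*x) x :> y \<and> y > 0" by auto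
next
  show "continuous_on {a..b} (\<lambda>x. ln x - c*x)"
    using assms by (auto intro!: continuous_intros)
qed

lemma F_dec:
  fixes c a b :: real
  assumes "c > 0" "1/c \<le> a" "a < b"
  shows "ln a - c*a > ln b - c*b"
proof (rule DERIV_neg_imp_decreasing_open[where f="\<lambda>x. ln x - c*x"])
  show "a < b" by fact
  have a0: "a > 0" using assms by (smt (verit) divide_pos_pos)
  fix x assume x: "a < x" "x < b"
  have "x > 0" using a0 x by linarith
  have "x > 1/c" using x assms by linarith
  then have "1/x < c" using \<open>x>0\<close> \<open>c>0\<close> by (simp add: field_simps)
  moreover have "DERIV (\<lambda>x. ln x - c*x) x :> 1/x - c"
    using \<open>x>0\<close> by (auto intro!: derivative_eq_intros)
  ultimately show "\<exists>y. DERIV (\<lambda>x. ln x - c*x) x :> y \<and> y < 0" by auto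
next
  have a0: "a > 0" using assms by (smt (verit) divide_pos_pos)
  show "continuous_on {a..b} (\<lambda>x. ln x - c*x)"
    using a0 by (auto intro!: continuous_intros)
qed

lemma delta_formula:
  fixes q :: real
  assumes q: "q > 0" "q \<noteq> 8/15"
  defines "c \<equiv> ln (pi/2)"
  defines "D \<equiv> (1 - (2/pi) powr (3*q - 8/5)) / (3*q - 8/5) - 1/(3*q)"
  shows "delta q = ereal D"
    and "D * (3*q - 8/5) * (3*q) = 8/5 * (1 - exp ((ln (3*q) - c*(3*q)) - (ln (8/5) - c*(8/5))))"
proof -
  show "delta q = ereal D" using q unfolding delta_def D_def by auto
  define s where "s = 3*q - 8/5"
  define t where "t = 3*q"
  define E where "E = exp (- c * s)"
  have t0: "t > 0" using q by (simp add: t_def)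
  have s0: "s \<noteq> 0" using q by (simp add: s_def)
  have lnc: "ln (2/pi) = - c" unfolding c_def using pi_gt_zero
    by (simp add: ln_div)
  have pw: "(2/pi) powr s = E" unfolding E_def powr_def using pi_gt_zero lnc
    by (simp add: mult.commute)
  have ex: "exp ((ln t - c*t) - (ln (8/5) - c*(8/5))) = t * E / (8/5)"
  proof -
    have "(ln t - c*t) - (ln (8/5) - c*(8/5)) = (ln t - ln (8/5)) + (- c * s)"
      by (simp add: s_def t_def algebra_simps)
    then have "exp ((ln t - c*t) - (ln (8/5) - c*(8/5))) = exp ((ln t - ln (8/5)) + (- c * s))"
      by (rule arg_cong)
    also have "\<dots> = exp (ln t - ln (8/5)) * E" by (simp only: exp_add E_def)
    finally have "exp ((ln t - c*t) - (ln (8/5) - c*(8/5))) = exp (ln t - ln (8/5)) * E" .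
    also have "exp (ln t - ln (8/5)) = t / (8/5)" using t0 by (simp add: exp_diff)
    finally show ?thesis by simp
  qed
  have pw': "(2/pi) powr (3*q - 8/5) = E" using pw by (simp add: s_def)
  have "D = (1 - E)/s - 1/t" unfolding D_def pw' by (simp add: s_def t_def)
  then have "D * s * t = 8/5 - t * E" using s0 t0 by (simp add: field_simps s_def t_def)
  then show "D * (3*q - 8/5) * (3*q) = 8/5 * (1 - exp ((ln (3*q) - c*(3*q)) - (ln (8/5) - c*(8/5))))"
    using ex unfolding s_def t_def by (simp add: field_simps)
qed

lemma sign_aux_pos:
  fixes D s t G :: real
  assumes "D * s * t = 8/5 * (1 - exp G)" "s > 0" "t > 0" "G < 0"
  shows "D > 0"
proof -
  have "exp G < 1" using assms by simp
  then have "8/5 * (1 - exp G) > 0" by simp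
  then have dst: "D * s * t > 0" by (simp only: assms(1))
  show ?thesis
  proof (rule ccontr)
    assume "\<not> D > 0"
    then have "D * s \<le> 0" using assms(2) by (intro mult_nonpos_nonneg) auto
    then have "D * s * t \<le> 0" using assms(3) by (simp add: mult_le_0_iff)
    then show False using dst by simp
  qed
qed

lemma sign_aux_neg1:
  fixes D s t G :: real
  assumes "D * s * t = 8/5 * (1 - exp G)" "s > 0" "t > 0" "G > 0"
  shows "D < 0"
proof -
  have "exp G > 1" using assms by simp
  then have "8/5 * (1 - exp G) < 0" by simp
  then have dst: "D * s * t < 0" by (simp only: assms(1))
  show ?thesis
  proof (rule ccontr)
    assume "\<not> D < 0"
    then have "D * s \<ge> 0" using assms(2) by (intro mult_nonneg_nonneg) auto
    then have "D * s * t \<ge> 0" using assms(3) by (simp add: zero_le_mult_iff)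
    then show False using dst by simp
  qed
qed

lemma sign_aux_neg2:
  fixes D s t G :: real
  assumes "D * s * t = 8/5 * (1 - exp G)" "s < 0" "t > 0" "G < 0"
  shows "D < 0"
proof -
  have "exp G < 1" using assms by simp
  then have "8/5 * (1 - exp G) > 0" by simp
  then have dst: "D * s * t > 0" by (simp only: assms(1))
  show ?thesis
  proof (rule ccontr)
    assume "\<not> D < 0"
    then have "D * s \<le> 0" using assms(2) by (intro mult_nonneg_nonpos) auto
    then have "D * s * t \<le> 0" using assms(3) by (simp add: mult_le_0_iff)
    then show False using dst by simp
  qed
qed

theorem lemma10:
  shows "\<exists>!q0::real. (\<forall>q. q > q0 \<longrightarrow> delta q > 0) \<and> (\<forall>q. q < q0 \<longrightarrow> delta q < 0)
           \<and> 0.9896805 < q0 \<and> q0 < 0.9896815"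
proof -
  define c :: real where "c = ln (pi/2)"
  define F where "F = (\<lambda>t::real. ln t - c*t)"
  define tlo :: real where "tlo = 29690415/10^7"
  define thi :: real where "thi = 29690445/10^7"
  have c1: "c \<ge> 0.4515827052644" using lnpi2_lb by (simp add: c_def)
  have c2: "c \<le> 0.4515827052929" using lnpi2_ub by (simp add: c_def)
  have c0: "c > 0" using c1 by simp
  have ic1: "1/c < 2.22" using c1 c0 by (simp add: field_simps)
  have ic2: "1/c > 2.2" using c2 c0 by (simp add: field_simps)
  have lnd1: "ln tlo - ln (8/5) = ln (29690415/16000000)"
  proof -
    have "ln (29690415/16000000::real) = ln (tlo / (8/5))" by (simp add: tlo_def)
    also have "\<dots> = ln tlo - ln (8/5)" by (subst ln_div) (auto simp: tlo_def)
    finally show ?thesis by simp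
  qed
  have lnd2: "ln thi - ln (8/5) = ln (29690445/16000000)"
  proof -
    have "ln (29690445/16000000::real) = ln (thi / (8/5))" by (simp add: thi_def)
    also have "\<dots> = ln thi - ln (8/5)" by (subst ln_div) (auto simp: thi_def)
    finally show ?thesis by simp
  qed
  have Flo: "F tlo > F (8/5)"
  proof -
    have "F tlo - F (8/5) = ln (29690415/16000000) - c * (tlo - 8/5)"
      unfolding F_def using lnd1 by (simp add: algebra_simps)
    moreover have "c * (tlo - 8/5) \<le> 0.4515827052929 * (tlo - 8/5)"
      using c2 by (intro mult_right_mono) (auto simp: tlo_def)
    ultimately show ?thesis using lnt_lb by (simp add: tlo_def)
  qed
  have Fhi: "F thi < F (8/5)"
  proof -
    have "F thi - F (8/5) = ln (29690445/16000000) - c * (thi - 8/5)"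
      unfolding F_def using lnd2 by (simp add: algebra_simps)
    moreover have "c * (thi - 8/5) \<ge> 0.4515827052644 * (thi - 8/5)"
      using c1 by (intro mult_right_mono) (auto simp: thi_def)
    ultimately show ?thesis using lnt_ub by (simp add: thi_def)
  qed
  have cont: "continuous_on {tlo..thi} F"
    unfolding F_def tlo_def by (auto intro!: continuous_intros)
  obtain t1 where t1: "tlo \<le> t1" "t1 \<le> thi" "F t1 = F (8/5)"
    using IVT2'[of F thi "F (8/5)" tlo, OF _ _ _ cont] Flo Fhi by (auto simp: tlo_def thi_def)
  have t1lo: "tlo < t1" using t1 Flo by (cases "t1 = tlo") auto
  have t1hi: "t1 < thi" using t1 Fhi by (cases "t1 = thi") auto
  define q0 where "q0 = t1/3"
  have ict1: "1/c \<le> t1" using ic1 t1lo by (simp add: tlo_def)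
  have P1: "\<forall>q. q > q0 \<longrightarrow> delta q > 0"
  proof (intro allI impI)
    fix q assume q: "q > q0"
    have t: "3*q > t1" using q by (simp add: q0_def)
    have qpos: "q > 0" "q \<noteq> 8/15" using t t1lo by (auto simp: tlo_def)
    have "F (3*q) < F t1" unfolding F_def using F_dec[OF c0 ict1 t] .
    then have G: "F (3*q) - F (8/5) < 0" using t1 by simp
    note df = delta_formula[OF qpos]
    have "(1 - (2/pi) powr (3*q - 8/5)) / (3*q - 8/5) - 1/(3*q) > 0"
      by (rule sign_aux_pos[OF df(2)[folded c_def]]) (use t t1lo G in \<open>auto simp: tlo_def F_def\<close>)
    then show "delta q > 0" using df(1) by simp
  qed
  have P2: "\<forall>q. q < q0 \<longrightarrow> delta q < 0"
  proof (intro allI impI)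
    fix q assume q: "q < q0"
    have t: "3*q < t1" using q by (simp add: q0_def)
    show "delta q < 0"
    proof (cases "q \<le> 0")
      case True then show ?thesis by (simp add: delta_def)
    next
      case False
      show ?thesis
      proof (cases "q = 8/15")
        case True
        have "- ln (2/pi) = c" unfolding c_def using pi_gt_zero by (simp add: ln_div)
        then show ?thesis using True c2 by (simp add: delta_def)
      next
        case q815: False
        have qpos: "q > 0" "q \<noteq> 8/15" using False q815 by auto
        note df = delta_formula[OF qpos]
        have D: "(1 - (2/pi) powr (3*q - 8/5)) / (3*q - 8/5) - 1/(3*q) < 0"
        proof (cases "3*q < 8/5")
          case True
          have "F (3*q) < F (8/5)" unfolding F_def
            by (rule F_inc[OF c0]) (use qpos True ic2 in auto)
          then show ?thesis
            by (intro sign_aux_neg2[OF df(2)[folded c_def]]) (use qpos True in \<open>auto simp: F_def\<close>)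
        next
          case False
          then have gt: "3*q > 8/5" using qpos by auto
          have "F (3*q) > F (8/5)"
          proof (cases "3*q \<le> 1/c")
            case True
            then show ?thesis unfolding F_def by (intro F_inc[OF c0]) (use gt in auto)
          next
            case False
            have "F (3*q) > F t1" unfolding F_def
              by (rule F_dec[OF c0]) (use False t in auto)
            then show ?thesis using t1 by simp
          qed
          then show ?thesis
            by (intro sign_aux_neg1[OF df(2)[folded c_def]]) (use qpos gt in \<open>auto simp: F_def\<close>)
        qed
        then show ?thesis using df(1) by simp
      qed
    qed
  qed
  have B: "0.9896805 < q0 \<and> q0 < 0.9896815"
    using t1lo t1hi by (simp add: q0_def tlo_def thi_def)
  show ?thesis
  proof (rule ex1I[where a=q0])
    show "(\<forall>q. q > q0 \<longrightarrow> delta q > 0) \<and> (\<forall>q. q < q0 \<longrightarrow> delta q < 0)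
           \<and> 0.9896805 < q0 \<and> q0 < 0.9896815" using P1 P2 B by blast
  next
    fix y assume y: "(\<forall>q. q > y \<longrightarrow> delta q > 0) \<and> (\<forall>q. q < y \<longrightarrow> delta q < 0)
           \<and> 0.9896805 < y \<and> y < 0.9896815"
    show "y = q0"
    proof (rule ccontr)
      assume ne: "y \<noteq> q0"
      define m where "m = (y + q0)/2"
      show False
      proof (cases "y < q0")
        case True
        then have "m > y" "m < q0" by (auto simp: m_def)
        then have "delta m > 0" "delta m < 0" using y P2 by auto
        then show False by simp
      next
        case False
        then have "m < y" "m > q0" using ne by (auto simp: m_def)
        then have "delta m < 0" "delta m > 0" using y P1 by auto
        then show False by simp
      qed
    qed
  qed
qed

end
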